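(* Assume $\ell=d$ and that $B_1,B_2,R_1,R_2$ (and $B_1+\bar B_1,B_2+\bar B_2,R_1+\bar R_1,R_2+\bar R_2$) are invertible. Let $P^o\in\mathbb R^{d\times d}$ solve $$P^o=\gamma(A^\top P^o+2Q)\big(A+(B_1\Gamma_1+B_2\Gamma_2)P^o\big),\qquad \Gamma_1=-\tfrac12R_1^{-1}B_1^\top,\ \Gamma_2=\tfrac12R_2^{-1}B_2^\top,$$ and set $P^c=\frac12A^\top P^o+Q$. If $A^\top P^o=(P^o)^\top A$ and the symmetric matrices $P^c$ and $(P^c)^{-1}+\gamma(B_1R_1^{-1}B_1^\top-B_2R_2^{-1}B_2^\top)$ are invertible, then $P^c\in\mathcal S^d$ is a solution of $0=\mathcal M(P^c)-\mathcal L(P^c)\mathcal N(P^c)^{-1}\mathcal L(P^c)^\top$.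
   Context: $\mathcal S^d$: symmetric $d\times d$ matrices. Fix $d\ge1$, $\gamma\in(0,1)$, $A,\bar A\in\mathbb R^{d\times d}$, $B_1,\bar B_1,B_2,\bar B_2\in\mathbb R^{d\times d}$, $Q\in\mathcal S^d$, symmetric $R_1,\bar R_1,R_2,\bar R_2\in\mathbb R^{d\times d}$. For $P\in\mathcal S^d$: $\mathcal M(P)=\gamma A^\top PA-P+Q$, $\mathcal L_i(P)=\gamma A^\top PB_i$, $\mathcal L_{12}(P)=\gamma B_1^\top PB_2$, $\mathcal N_1(P)=\gamma B_1^\top PB_1+R_1$, $\mathcal N_2(P)=\gamma B_2^\top PB_2-R_2$, $\mathcal L(P)=[\mathcal L_1(P),\mathcal L_2(P)]$, $\mathcal N(P)=\begin{bmatrix}\mathcal N_1(P)&\mathcal L_{12}(P)\\\mathcal L_{12}(P)^\top&\mathcal N_2(P)\end{bmatrix}$. *)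

theory Defs
  imports "HOL-Analysis.Analysis"
begin

text \<open>Matrices are d x d real matrices, represented as (real^'n^'n) (d = CARD('n)).
  The control dimension l equals d. Block matrices are indexed by 'n + 'n
  (Inl = first block, Inr = second block).\<close>

definition symm :: "(real^'n^'n) \<Rightarrow> bool" where
  "symm P \<longleftrightarrow> transpose P = P"

definition Mop :: "real \<Rightarrow> (real^'n^'n) \<Rightarrow> (real^'n^'n) \<Rightarrow> (real^'n^'n) \<Rightarrow> (real^'n^'n)" where
  "Mop \<gamma> A Q P = \<gamma> *\<^sub>R (transpose A ** P ** A) - P + Q"

definition Lop :: "real \<Rightarrow> (real^'n^'n) \<Rightarrow> (real^'n^'n) \<Rightarrow> (real^'n^'n) \<Rightarrow> (real^'n^'n) \<Rightarrow> (real^('n+'n)^'n)" where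
  "Lop \<gamma> A B1 B2 P =
     (let L1 = \<gamma> *\<^sub>R (transpose A ** P ** B1); L2 = \<gamma> *\<^sub>R (transpose A ** P ** B2)
      in \<chi> i j. (case j of Inl k \<Rightarrow> L1 $ i $ k | Inr k \<Rightarrow> L2 $ i $ k))"

definition Nop :: "real \<Rightarrow> (real^'n^'n) \<Rightarrow> (real^'n^'n) \<Rightarrow> (real^'n^'n) \<Rightarrow> (real^'n^'n)
                    \<Rightarrow> (real^'n^'n) \<Rightarrow> (real^('n+'n)^('n+'n))" where
  "Nop \<gamma> B1 B2 R1 R2 P =
     (let N1 = \<gamma> *\<^sub>R (transpose B1 ** P ** B1) + R1;
          N2 = \<gamma> *\<^sub>R (transpose B2 ** P ** B2) - R2;
          L12 = \<gamma> *\<^sub>R (transpose B1 ** P ** B2)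
      in \<chi> i j. (case i of
            Inl a \<Rightarrow> (case j of Inl b \<Rightarrow> N1 $ a $ b | Inr b \<Rightarrow> L12 $ a $ b)
          | Inr a \<Rightarrow> (case j of Inl b \<Rightarrow> transpose L12 $ a $ b | Inr b \<Rightarrow> N2 $ a $ b)))"

end

theory Submission imports Defs begin

definition row2 :: "real^'n^'m \<Rightarrow> real^'n^'m \<Rightarrow> real^('n+'n)^'m" where
  "row2 X Y = (\<chi> i j. case j of Inl k \<Rightarrow> X$i$k | Inr k \<Rightarrow> Y$i$k)"
definition col2 :: "real^'n^'m \<Rightarrow> real^'n^'m \<Rightarrow> real^'n^('m+'m)" where
  "col2 U V = (\<chi> i j. case i of Inl k \<Rightarrow> U$k$j | Inr k \<Rightarrow> V$k$j)"
definition blk :: "real^'n^'m \<Rightarrow> real^'n^'m \<Rightarrow> real^'n^'m \<Rightarrow> real^'n^'m \<Rightarrow> real^('n+'n)^('m+'m)" where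
  "blk M11 M12 M21 M22 = (\<chi> i j. (case i of
            Inl a \<Rightarrow> (case j of Inl b \<Rightarrow> M11 $ a $ b | Inr b \<Rightarrow> M12 $ a $ b)
          | Inr a \<Rightarrow> (case j of Inl b \<Rightarrow> M21 $ a $ b | Inr b \<Rightarrow> M22 $ a $ b)))"

lemma sum_Plus_UNIV:
  "(\<Sum>x\<in>(UNIV::('a::finite+'b::finite) set). f x) = (\<Sum>x\<in>UNIV. f (Inl x)) + (\<Sum>x\<in>UNIV. f (Inr x))"
proof -
  have "(\<Sum>x\<in>(UNIV::('a+'b) set). f x) = (\<Sum>x\<in>Inl ` UNIV \<union> Inr ` UNIV. f x)"
    by (simp only: UNIV_sum[symmetric])
  also have "\<dots> = (\<Sum>x\<in>Inl ` (UNIV::'a set). f x) + (\<Sum>x\<in>Inr ` (UNIV::'b set). f x)"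
    by (rule sum.union_disjoint) auto
  also have "\<dots> = (\<Sum>x\<in>UNIV. f (Inl x)) + (\<Sum>x\<in>UNIV. f (Inr x))"
    by (simp add: sum.reindex)
  finally show ?thesis .
qed

lemma row2_mult_col2: "row2 X Y ** col2 U V = X ** U + Y ** V"
  by (simp add: vec_eq_iff matrix_matrix_mult_def row2_def col2_def sum_Plus_UNIV)

lemma mult_row2: "M ** row2 X Y = row2 (M ** X) (M ** Y)"
  by (simp add: vec_eq_iff matrix_matrix_mult_def row2_def split: sum.split)

lemma col2_mult: "col2 U V ** M = col2 (U ** M) (V ** M)"
  by (simp add: vec_eq_iff matrix_matrix_mult_def col2_def split: sum.split)

lemma col2_mult_row2: "col2 U V ** row2 X Y = blk (U ** X) (U ** Y) (V ** X) (V ** Y)"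
  by (simp add: vec_eq_iff matrix_matrix_mult_def col2_def row2_def blk_def split: sum.split)

lemma row2_mult_blk: "row2 X Y ** blk a b c d = row2 (X ** a + Y ** c) (X ** b + Y ** d)"
  by (simp add: vec_eq_iff matrix_matrix_mult_def row2_def blk_def sum_Plus_UNIV split: sum.split)

lemma blk_mult_blk: "blk a b c d ** blk e f g h = blk (a ** e + b ** g) (a ** f + b ** h) (c ** e + d ** g) (c ** f + d ** h)"
  by (simp add: vec_eq_iff matrix_matrix_mult_def blk_def sum_Plus_UNIV split: sum.split)

lemma transpose_row2: "transpose (row2 X Y) = col2 (transpose X) (transpose Y)"
  by (simp add: vec_eq_iff transpose_def row2_def col2_def split: sum.split)

lemma mat1_blk: "(mat 1 :: real^('n::finite+'n)^('n+'n)) = blk (mat 1) 0 0 (mat 1)"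
  by (simp add: vec_eq_iff mat_def blk_def split: sum.split)

lemma scaleR_blk: "k *\<^sub>R blk a b c d = blk (k *\<^sub>R a) (k *\<^sub>R b) (k *\<^sub>R c) (k *\<^sub>R d)"
  by (simp add: vec_eq_iff blk_def split: sum.split)

lemma blk_add: "blk a b c d + blk e f g h = blk (a + e) (b + f) (c + g) (d + h)"
  by (simp add: vec_eq_iff blk_def split: sum.split)

lemma scaleR_row2: "k *\<^sub>R row2 a b = row2 (k *\<^sub>R a) (k *\<^sub>R b)"
  by (simp add: vec_eq_iff row2_def split: sum.split)

lemma mm_diff_left: "(A - B) ** (C::real^'a^'b) = A ** C - B ** C"
  by (simp add: vec_eq_iff matrix_matrix_mult_def algebra_simps sum_subtractf)
lemma mm_diff_right: "(C::real^'a^'b) ** (A - B) = C ** A - C ** B"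
  by (simp add: vec_eq_iff matrix_matrix_mult_def algebra_simps sum_subtractf)
lemma mm_scale_left: "(k *\<^sub>R A) ** (C::real^'a^'b) = k *\<^sub>R (A ** C)"
  by (simp add: scalar_matrix_assoc)
lemma mm_scale_right: "(C::real^'a^'b) ** (k *\<^sub>R A) = k *\<^sub>R (C ** A)"
  by (simp add: vec_eq_iff matrix_matrix_mult_def sum_distrib_left mult_ac)
lemma mm_neg_left: "(- A) ** (C::real^'a^'b) = - (A ** C)"
  by (simp add: vec_eq_iff matrix_matrix_mult_def sum_negf)
lemma mm_neg_right: "(C::real^'a^'b) ** (- A) = - (C ** A)"
  by (simp add: vec_eq_iff matrix_matrix_mult_def sum_negf)

lemma mm_add_left: "(A + B) ** (C::real^'a^'b) = A ** C + B ** C"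
  by (simp add: vec_eq_iff matrix_matrix_mult_def algebra_simps sum.distrib)
lemma transpose_add2: "transpose ((A::real^'a^'b) + B) = transpose A + transpose B"
  by (simp add: vec_eq_iff transpose_def)

lemma minv: fixes A :: "real^'n^'n" assumes "invertible A"
  shows "A ** matrix_inv A = mat 1" "matrix_inv A ** A = mat 1"
proof -
  have "A ** matrix_inv A = mat 1 \<and> matrix_inv A ** A = mat 1"
    unfolding matrix_inv_def by (rule someI_ex) (use assms in \<open>simp add: invertible_def\<close>)
  then show "A ** matrix_inv A = mat 1" "matrix_inv A ** A = mat 1" by auto
qed

lemma minv_unique: fixes A X :: "real^'n^'n" assumes "A ** X = mat 1"
  shows "invertible A" "matrix_inv A = X"
proof -
  show i: "invertible A" using assms invertible_right_inverse by blast
  have "matrix_inv A = matrix_inv A ** (A ** X)" using assms by simp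
  also have "\<dots> = X" by (simp add: matrix_mul_assoc minv(2)[OF i])
  finally show "matrix_inv A = X" .
qed

lemmas ms = matrix_add_ldistrib mm_add_left mm_diff_left mm_diff_right mm_scale_left mm_scale_right
  mm_neg_left mm_neg_right matrix_mul_assoc

theorem mainTheorem15:
  fixes \<gamma> :: real
    and A B1 B1b B2 B2b Q R1 R1b R2 R2b Po :: "real^'n^'n"
  assumes "0 < \<gamma>" and "\<gamma> < 1"
    and "symm Q" and "symm R1" and "symm R1b" and "symm R2" and "symm R2b"
    and "invertible B1" and "invertible B2" and "invertible R1" and "invertible R2"
    and "invertible (B1 + B1b)" and "invertible (B2 + B2b)"
    and "invertible (R1 + R1b)" and "invertible (R2 + R2b)"
    and Po_eq: "Po = \<gamma> *\<^sub>R ((transpose A ** Po + 2 *\<^sub>R Q) **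
              (A + (B1 ** ((- 1/2) *\<^sub>R (matrix_inv R1 ** transpose B1))
                    + B2 ** ((1/2) *\<^sub>R (matrix_inv R2 ** transpose B2))) ** Po))"
    and "transpose A ** Po = transpose Po ** A"
    and "invertible ((1/2) *\<^sub>R (transpose A ** Po) + Q)"
    and "invertible (matrix_inv ((1/2) *\<^sub>R (transpose A ** Po) + Q)
            + \<gamma> *\<^sub>R (B1 ** matrix_inv R1 ** transpose B1 - B2 ** matrix_inv R2 ** transpose B2))"
  shows "let Pc = (1/2) *\<^sub>R (transpose A ** Po) + Q in
           symm Pc \<and> invertible (Nop \<gamma> B1 B2 R1 R2 Pc) \<and>
           Mop \<gamma> A Q Pc - Lop \<gamma> A B1 B2 Pc ** matrix_inv (Nop \<gamma> B1 B2 R1 R2 Pc)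
             ** transpose (Lop \<gamma> A B1 B2 Pc) = 0"
proof -
  define P where "P = (1/2) *\<^sub>R (transpose A ** Po) + Q"
  define Pi where "Pi = matrix_inv P"
  define R1i where "R1i = matrix_inv R1"
  define R2i where "R2i = matrix_inv R2"
  define S where "S = B1 ** R1i ** transpose B1 - B2 ** R2i ** transpose B2"
  define W where "W = matrix_inv (Pi + \<gamma> *\<^sub>R S)"
  define B where "B = row2 B1 B2"
  define Rb where "Rb = blk R1 0 0 (-R2)"
  define Ri where "Ri = blk R1i 0 0 (-R2i)"
  define X0 where "X0 = Ri - \<gamma> *\<^sub>R (Ri ** transpose B ** W ** B ** Ri)"
  have g0: "\<gamma> \<noteq> 0" using assms(1) by simp
  have symP: "transpose P = P"
    using assms(3,17) by (simp add: P_def transpose_add2 transpose_scalar matrix_transpose_mul symm_def)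
  have hP: "P ** Pi = mat 1" "Pi ** P = mat 1" using minv[OF assms(18)] by (simp_all add: P_def Pi_def)
  have hW: "(Pi + \<gamma> *\<^sub>R S) ** W = mat 1" "W ** (Pi + \<gamma> *\<^sub>R S) = mat 1"
    using minv[OF assms(19)] by (simp_all add: P_def Pi_def W_def S_def R1i_def R2i_def)
  have W1: "W = P - \<gamma> *\<^sub>R (P ** S ** W)"
  proof -
    have "P ** ((Pi + \<gamma> *\<^sub>R S) ** W) = P" using hW by simp
    hence "P ** Pi ** W + \<gamma> *\<^sub>R (P ** S ** W) = P" by (simp add: ms)
    thus ?thesis using hP by (simp add: algebra_simps)
  qed
  have W2: "W = P - \<gamma> *\<^sub>R (W ** S ** P)"
  proof -
    have "(W ** (Pi + \<gamma> *\<^sub>R S)) ** P = P" using hW by simp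
    hence "W ** (Pi ** P) + \<gamma> *\<^sub>R (W ** S ** P) = P" by (simp add: ms matrix_mul_assoc[symmetric] del: matrix_mul_assoc)
    thus ?thesis using hP by (simp add: algebra_simps)
  qed
  have key: "P - \<gamma> *\<^sub>R (P ** S ** P) + (\<gamma> * \<gamma>) *\<^sub>R (P ** S ** W ** S ** P) - W = 0"
  proof -
    have "P ** S ** W = P ** S ** (P - \<gamma> *\<^sub>R (W ** S ** P))" using W2 by metis
    hence "P ** S ** W = P ** S ** P - \<gamma> *\<^sub>R (P ** S ** W ** S ** P)" by (simp add: ms)
    hence "W = P - \<gamma> *\<^sub>R (P ** S ** P - \<gamma> *\<^sub>R (P ** S ** W ** S ** P))" using W1 by metis
    thus ?thesis by (simp add: algebra_simps)
  qed
  have C_eq: "B1 ** ((- 1/2) *\<^sub>R (matrix_inv R1 ** transpose B1))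
                    + B2 ** ((1/2) *\<^sub>R (matrix_inv R2 ** transpose B2)) = (-1/2) *\<^sub>R S"
    by (simp add: S_def R1i_def R2i_def ms algebra_simps)
  have T_eq: "transpose A ** Po + 2 *\<^sub>R Q = 2 *\<^sub>R P" by (simp add: P_def scaleR_add_right)
  have Po2: "Po = (2*\<gamma>) *\<^sub>R (P ** A) - \<gamma> *\<^sub>R (P ** S ** Po)"
    using Po_eq unfolding C_eq T_eq by (simp add: ms algebra_simps)
  have "Pi ** Po = (2*\<gamma>) *\<^sub>R (Pi ** P ** A) - \<gamma> *\<^sub>R (Pi ** P ** S ** Po)"
    by (subst Po2) (simp add: ms)
  hence "Pi ** Po = (2*\<gamma>) *\<^sub>R A - \<gamma> *\<^sub>R (S ** Po)" using hP by simp
  hence "(Pi + \<gamma> *\<^sub>R S) ** Po = (2*\<gamma>) *\<^sub>R A" by (simp add: ms algebra_simps)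
  hence "W ** ((Pi + \<gamma> *\<^sub>R S) ** Po) = (2*\<gamma>) *\<^sub>R (W ** A)" by (simp add: ms)
  hence PoW: "Po = (2*\<gamma>) *\<^sub>R (W ** A)" by (simp add: matrix_mul_assoc hW)
  have Qeq: "Q = P - \<gamma> *\<^sub>R (transpose A ** W ** A)"
    using PoW by (simp add: P_def ms algebra_simps)
  have Lop_eq: "Lop \<gamma> A B1 B2 P = \<gamma> *\<^sub>R (transpose A ** P ** B)"
  proof -
    have "Lop \<gamma> A B1 B2 P = row2 (\<gamma> *\<^sub>R (transpose A ** P ** B1)) (\<gamma> *\<^sub>R (transpose A ** P ** B2))"
      unfolding Lop_def row2_def Let_def ..
    thus ?thesis by (simp add: B_def mult_row2 scaleR_row2)
  qed
  have Nop_eq: "Nop \<gamma> B1 B2 R1 R2 P = \<gamma> *\<^sub>R (transpose B ** P ** B) + Rb"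
  proof -
    have "Nop \<gamma> B1 B2 R1 R2 P = blk (\<gamma> *\<^sub>R (transpose B1 ** P ** B1) + R1) (\<gamma> *\<^sub>R (transpose B1 ** P ** B2))
        (transpose (\<gamma> *\<^sub>R (transpose B1 ** P ** B2))) (\<gamma> *\<^sub>R (transpose B2 ** P ** B2) - R2)"
      unfolding Nop_def blk_def Let_def ..
    also have "transpose (\<gamma> *\<^sub>R (transpose B1 ** P ** B2)) = \<gamma> *\<^sub>R (transpose B2 ** P ** B1)"
      by (simp add: transpose_scalar matrix_transpose_mul symP matrix_mul_assoc)
    finally show ?thesis
      by (simp add: B_def Rb_def transpose_row2 col2_mult[of "transpose B1" "transpose B2" P] col2_mult_row2 scaleR_blk blk_add)
  qed
  have BRB: "B ** Ri ** transpose B = S"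
    by (simp add: B_def Ri_def S_def row2_mult_blk transpose_row2 row2_mult_col2 mm_neg_right mm_neg_left)
  have BRB': "Z ** B ** Ri ** transpose B = Z ** S" for Z :: "real^'n^'z::finite"
    using BRB by (metis matrix_mul_assoc)
  have RR: "Rb ** Ri = mat 1"
    using minv(1)[OF assms(10)] minv(1)[OF assms(11)]
    by (simp add: Rb_def Ri_def R1i_def R2i_def blk_mult_blk mat1_blk mm_neg_right mm_neg_left)
  have NX: "Nop \<gamma> B1 B2 R1 R2 P ** X0 = mat 1"
  proof -
    have "Nop \<gamma> B1 B2 R1 R2 P ** X0 = mat 1 + \<gamma> *\<^sub>R (transpose B ** (P - \<gamma> *\<^sub>R (P ** S ** W) - W) ** B ** Ri)"
      unfolding Nop_eq X0_def by (simp add: ms RR BRB' algebra_simps)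
    also have "P - \<gamma> *\<^sub>R (P ** S ** W) - W = 0" using W1 by simp
    finally show ?thesis by simp
  qed
  note NI = minv_unique[OF NX]
  have LT: "transpose (Lop \<gamma> A B1 B2 P) = \<gamma> *\<^sub>R (transpose B ** P ** A)"
    by (simp add: Lop_eq transpose_scalar matrix_transpose_mul symP matrix_mul_assoc)
  have "Mop \<gamma> A Q P - Lop \<gamma> A B1 B2 P ** matrix_inv (Nop \<gamma> B1 B2 R1 R2 P) ** transpose (Lop \<gamma> A B1 B2 P)
     = \<gamma> *\<^sub>R (transpose A ** (P - \<gamma> *\<^sub>R (P ** S ** P) + (\<gamma> * \<gamma>) *\<^sub>R (P ** S ** W ** S ** P) - W) ** A)"
    unfolding NI(2) LT unfolding Lop_eq Mop_def X0_def Qeq by (simp add: ms BRB' algebra_simps)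
  also have "\<dots> = 0" by (simp add: key)
  finally have fin: "Mop \<gamma> A Q P - Lop \<gamma> A B1 B2 P ** matrix_inv (Nop \<gamma> B1 B2 R1 R2 P) ** transpose (Lop \<gamma> A B1 B2 P) = 0" .
  show ?thesis unfolding Let_def P_def[symmetric] using symP NI(1) fin by (simp add: symm_def)
qed
end
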